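(* Let $m\ge 1$ and let $f_1,\dots,f_m:[0,\infty)\to[0,\infty)$ be twice differentiable functions such that for every $i$: $f_i(0)=0$; $f_i(x)<x$ for all $x>0$; $f_i'(x)>0$ and $f_i''(x)<0$ for all $x$; and $\lim_{x\to\infty}f_i(x)=K_i<\infty$. Fix $\rho\in[0,1)$. Then there is a unique pair $(\mathbf{u},\mu)$ with $\mathbf{u}=(u_1,\dots,u_m)^{T}$, $u_i\ge 0$, $\sum_i u_i=1$, and $0<\mu<1$, satisfying $$u_i=\Big((1-\rho)+\frac{\rho}{\mu}\Big)f_i(u_i)+\frac{1-\rho}{m}(1-\mu)\quad (i=1,\dots,m),\qquad \mu=\sum_{i=1}^m f_i(u_i),$$ i.e. the map $F$ below has a unique fixed point on the simplex. Moreover this fixed point is linearly stable: every eigenvalue of the Jacobian of $F$ at the fixed point is real and lies in $[0,1)$.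
   Context: The infinite-population foraging model is the map $F$ on the simplex $\{\mathbf{u}\in\mathbb{R}^m: u_i\ge0,\ \sum_i u_i=1\}$ given by $\mathbf{u}_{n+1}=F(\mathbf{u}_n)$ with $$F(\mathbf{u})=\mathbf{f}(\mathbf{u})+\big(1-\langle\mathbf{1},\mathbf{f}(\mathbf{u})\rangle\big)\Big(\frac{\rho}{\langle\mathbf{1},\mathbf{f}(\mathbf{u})\rangle}\mathbf{f}(\mathbf{u})+\frac{1-\rho}{m}\mathbf{1}\Big),$$ where $\mathbf{f}(\mathbf{u})=(f_1(u_1),\dots,f_m(u_m))^T$, $\mathbf{1}=(1,\dots,1)^T$, and $\rho\in[0,1]$ is the recruitment probability. Here $u_{i,n}$ is the fraction of foragers flying to site $i$ at time $n$ and $f_i(u)$ the fraction that forage successfully there. Steady states are fixed points of $F$. *)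

theory Defs
  imports "HOL-Analysis.Analysis"
begin

text \<open>The probability prob_simplex in R^m, sites indexed by a finite type 'n with m = CARD('n).\<close>
definition prob_simplex :: "(real^'n::finite) set" where
  "prob_simplex = {u. (\<forall>i. 0 \<le> u$i) \<and> (\<Sum>i\<in>UNIV. u$i) = 1}"

definition forage_map :: "('n::finite \<Rightarrow> real \<Rightarrow> real) \<Rightarrow> real \<Rightarrow> real^'n \<Rightarrow> real^'n" where
  "forage_map f \<rho> u =
     (let S = (\<Sum>j\<in>UNIV. f j (u$j)) in
      (\<chi> i. f i (u$i) + (1 - S) * (\<rho> / S * f i (u$i) + (1 - \<rho>) / real CARD('n))))"

definition cmat :: "real^'n^'m \<Rightarrow> complex^'n^'m" where
  "cmat A = (\<chi> i j. complex_of_real (A$i$j))"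

definition is_eigenvalue :: "real^'n^'n \<Rightarrow> complex \<Rightarrow> bool" where
  "is_eigenvalue A lam \<longleftrightarrow> (\<exists>v. v \<noteq> 0 \<and> cmat A *v v = lam *s v)"

end

theory Submission
  imports Defs
begin


locale concf =
  fixes g g' g'' :: "real \<Rightarrow> real"
  assumes d1: "\<And>x. x \<ge> 0 \<Longrightarrow> (g has_real_derivative g' x) (at x within {0..})"
      and d2: "\<And>x. x \<ge> 0 \<Longrightarrow> (g' has_real_derivative g'' x) (at x within {0..})"
      and cc: "\<And>x. x \<ge> 0 \<Longrightarrow> g'' x < 0"
begin

lemma at_pos: "x > 0 \<Longrightarrow> (F has_real_derivative D) (at x within {0..}) \<Longrightarrow> (F has_real_derivative D) (at x)"
proof -
  assume "x > 0" and dd: "(F has_real_derivative D) (at x within {0..})"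
  have "(F has_real_derivative D) (at x within {0<..})"
    by (rule DERIV_subset[OF dd]) auto
  then show ?thesis using at_within_open[of x "{0<..}"] \<open>x>0\<close> by simp
qed

lemma cont_g: "continuous_on {0..} g"
  unfolding continuous_on_eq_continuous_within
  using d1 DERIV_continuous by (metis atLeast_iff continuous_within_subset subset_refl)

lemma cont_g': "continuous_on {0..} g'"
  unfolding continuous_on_eq_continuous_within
  using d2 DERIV_continuous by (metis atLeast_iff continuous_within_subset subset_refl)

lemma g'_dec: assumes "0 \<le> a" "a \<le> b" shows "g' b \<le> g' a"
proof (rule DERIV_nonpos_imp_decreasing_open[OF assms(2)])
  fix x assume "a < x" "x < b"
  then show "\<exists>y. DERIV g' x :> y \<and> y \<le> 0"
    using at_pos[OF _ d2[of x]] cc[of x] assms by (intro exI[of _ "g'' x"]) auto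
next
  show "continuous_on {a..b} g'" using assms by (intro continuous_on_subset[OF cont_g']) auto
qed

lemma tangent: assumes "0 \<le> y" "0 \<le> z" shows "g z \<le> g y + g' y * (z - y)"
proof -
  define h where "h x = g x - g' y * x" for x
  have dh: "x > 0 \<Longrightarrow> DERIV h x :> g' x - g' y" for x
    unfolding h_def using at_pos[OF _ d1[of x]]
    by (auto intro!: derivative_eq_intros)
  have ch: "continuous_on {a..b} h" if "0 \<le> a" for a b
    unfolding h_def using that
    by (intro continuous_intros continuous_on_subset[OF cont_g]) auto
  have "h z \<le> h y"
  proof (cases "y \<le> z")
    case True
    show ?thesis
    proof (rule DERIV_nonpos_imp_decreasing_open[OF True])
      fix x assume "y < x" "x < z"
      then show "\<exists>yy. DERIV h x :> yy \<and> yy \<le> 0"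
        using dh[of x] g'_dec[of y x] assms by (intro exI[of _ "g' x - g' y"]) auto
    qed (use ch assms in auto)
  next
    case False
    then have zy: "z \<le> y" by simp
    show ?thesis
    proof (rule DERIV_nonneg_imp_increasing_open[OF zy])
      fix x assume "z < x" "x < y"
      then show "\<exists>yy. DERIV h x :> yy \<and> yy \<ge> 0"
        using dh[of x] g'_dec[of x y] assms by (intro exI[of _ "g' x - g' y"]) auto
    qed (use ch assms in auto)
  qed
  then show ?thesis unfolding h_def by (simp add: algebra_simps)
qed

lemma root_props:
  assumes g0: "g 0 = 0" and a: "a > 0" and t: "t > 0" and r: "r \<ge> 0" "r = a * g r + t"
  shows "r > 0" and "a * g' r < 1"
    and "\<And>x. 0 \<le> x \<Longrightarrow> x < r \<Longrightarrow> a * g x + t > x"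
    and "\<And>x. x > r \<Longrightarrow> a * g x + t < x"
proof -
  show rp: "r > 0" using r t g0 by (cases "r = 0") auto
  have "g 0 \<le> g r + g' r * (0 - r)" by (rule tangent) (use r in auto)
  then have "r * g' r \<le> g r" using g0 by (simp add: mult.commute)
  then have "a * (r * g' r) \<le> a * g r" using a by (simp add: mult_left_mono)
  then have "r * (a * g' r) < r * 1" using r t by (simp add: algebra_simps)
  then show ag: "a * g' r < 1" using rp by simp
  fix x assume "x > r"
  have "g x \<le> g r + g' r * (x - r)" by (rule tangent) (use r \<open>x>r\<close> in auto)
  then have "a * g x \<le> a * g r + (a * g' r) * (x - r)" using a
    by (metis (no_types, opaque_lifting) distrib_left mult.assoc mult_left_mono order_less_imp_le)
  moreover have "(a * g' r) * (x - r) < 1 * (x - r)" using ag \<open>x > r\<close> by (intro mult_strict_right_mono) auto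
  then have "(a * g' r) * (x - r) < x - r" by simp
  ultimately show "a * g x + t < x" using r by linarith
next
  fix x assume x: "0 \<le> x" "x < r"
  show "a * g x + t > x"
  proof (cases "x = 0")
    case True then show ?thesis using g0 t by simp
  next
    case False
    have t1: "g 0 \<le> g x + g' x * (0 - x)" by (rule tangent) (use x in auto)
    have t2: "g r \<le> g x + g' x * (r - x)" by (rule tangent) (use x in auto)
    have "(r - x) * g 0 \<le> (r - x) * (g x + g' x * (0 - x))" using t1 x by (intro mult_left_mono) auto
    moreover have "x * g r \<le> x * (g x + g' x * (r - x))" using t2 x by (intro mult_left_mono) auto
    ultimately have "x * g r \<le> r * g x" using g0 by (simp add: algebra_simps)
    then have "x * (a * g r) \<le> r * (a * g x)" using a
      by (metis mult.left_commute mult_left_mono order_less_imp_le)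
    moreover have "a * g r = r - t" using r by simp
    ultimately have "x * (r - t) \<le> r * (a * g x)" by simp
    then have "r * x - x * t \<le> r * (a * g x)" by (simp add: algebra_simps)
    moreover have "x * t < r * t" using x t by simp
    ultimately have "r * x < r * (a * g x + t)" by (simp add: algebra_simps)
    moreover have "r > 0" using x by simp
    ultimately show ?thesis by simp
  qed
qed

end


lemma eig_core:
  fixes x b d :: "'n::finite \<Rightarrow> real" and lam :: complex and v :: "'n \<Rightarrow> complex"
  assumes x: "\<And>i. 0 < x i" "\<And>i. x i < 1" and b: "\<And>i. 0 < b i" and d: "\<And>i. 0 < d i"
  and sumw: "(\<Sum>i\<in>UNIV. d i * b i / x i) = 1"
  and eq: "\<And>i. of_real (x i) * v i - of_real (b i) * (\<Sum>k\<in>UNIV. of_real (d k) * v k) = lam * v i"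
  and nz: "v i0 \<noteq> 0"
  shows "Im lam = 0 \<and> 0 \<le> Re lam \<and> Re lam < 1"
proof -
  define s where "s = (\<Sum>k\<in>UNIV. of_real (d k) * v k)"
  have eq': "of_real (x i) * v i - of_real (b i) * s = lam * v i" for i
    using eq[of i] unfolding s_def .
  show ?thesis
  proof (cases "s = 0")
    case True
    then have "of_real (x i0) * v i0 = lam * v i0" using eq'[of i0] by simp
    then have "lam = of_real (x i0)" using nz by simp
    then show ?thesis using x[of i0] by simp
  next
    case False
    define z where "z k = of_real (x k) - lam" for k
    have znz: "z k \<noteq> 0" for k
    proof
      assume "z k = 0"
      then have "lam = of_real (x k)" unfolding z_def by simp
      then have "of_real (b k) * s = 0" using eq'[of k] by simp
      then show False using b[of k] False by simp
    qed
    have vk: "v k = of_real (b k) * s / z k" for k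
      using eq'[of k] znz[of k] unfolding z_def by (simp add: field_simps)
    have "s = (\<Sum>k\<in>UNIV. of_real (d k) * v k)" by (simp add: s_def)
    also have "\<dots> = (\<Sum>k\<in>UNIV. of_real (d k) * (of_real (b k) * s / z k))"
      by (simp only: vk)
    also have "\<dots> = s * (\<Sum>k\<in>UNIV. of_real (d k * b k) / z k)"
      by (simp add: sum_distrib_left field_simps)
    finally have one: "(\<Sum>k\<in>UNIV. of_real (d k * b k) / z k) = 1"
      using False by (metis mult_cancel_left1)
    have imk: "Im (of_real (d k * b k) / z k) = Im lam * ((d k * b k) / ((Re (z k))\<^sup>2 + (Im (z k))\<^sup>2))" for k
      unfolding z_def by (simp add: Im_divide field_simps)
    have "0 = Im (\<Sum>k\<in>UNIV. of_real (d k * b k) / z k)" using one by simp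
    also have "\<dots> = (\<Sum>k\<in>UNIV. Im (of_real (d k * b k) / z k))" by (simp only: Im_sum)
    also have "\<dots> = (\<Sum>k\<in>UNIV. Im lam * ((d k * b k) / ((Re (z k))\<^sup>2 + (Im (z k))\<^sup>2)))"
      by (simp only: imk)
    also have "\<dots> = Im lam * (\<Sum>k\<in>UNIV. (d k * b k) / ((Re (z k))\<^sup>2 + (Im (z k))\<^sup>2))"
      by (simp only: sum_distrib_left)
    finally have "Im lam * (\<Sum>k\<in>UNIV. (d k * b k) / ((Re (z k))\<^sup>2 + (Im (z k))\<^sup>2)) = 0" by simp
    moreover have "(\<Sum>k\<in>UNIV. (d k * b k) / ((Re (z k))\<^sup>2 + (Im (z k))\<^sup>2)) > 0"
    proof (rule sum_pos)
      fix k :: 'n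
      have "(Re (z k))\<^sup>2 + (Im (z k))\<^sup>2 > 0" using znz[of k]
        by (simp add: complex_eq_iff sum_power2_gt_zero_iff)
      then show "(d k * b k) / ((Re (z k))\<^sup>2 + (Im (z k))\<^sup>2) > 0" using d[of k] b[of k] by simp
    qed auto
    ultimately have im0: "Im lam = 0" by simp
    define r where "r = Re lam"
    have lamr: "lam = of_real r" using im0 unfolding r_def by (simp add: complex_eq_iff)
    have zr: "z k = of_real (x k - r)" for k unfolding z_def lamr by simp
    have one': "(\<Sum>k\<in>UNIV. (d k * b k) / (x k - r)) = 1"
    proof -
      have "of_real (\<Sum>k\<in>UNIV. (d k * b k) / (x k - r)) = (1::complex)"
        using one unfolding zr by simp
      then show ?thesis by (metis of_real_eq_1_iff)
    qed
    have "0 \<le> r"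
    proof (rule ccontr)
      assume "\<not> 0 \<le> r"
      then have rn: "r < 0" by simp
      have "(d k * b k) / (x k - r) < d k * b k / x k" for k
        using x[of k] d[of k] b[of k] rn by (intro divide_strict_left_mono) auto
      then have "(\<Sum>k\<in>UNIV. (d k * b k) / (x k - r)) < (\<Sum>k\<in>UNIV. d k * b k / x k)"
        by (intro sum_strict_mono) auto
      then show False using one' sumw by simp
    qed
    moreover have "r < 1"
    proof (rule ccontr)
      assume "\<not> r < 1"
      then have rn: "1 \<le> r" by simp
      have "(d k * b k) / (x k - r) < 0" for k
        using x[of k] d[of k] b[of k] rn by (intro divide_pos_neg) auto
      then have "(\<Sum>k\<in>UNIV. (d k * b k) / (x k - r)) < (\<Sum>k\<in>(UNIV::'n set). 0)"
        by (intro sum_strict_mono) auto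
      then show False using one' by simp
    qed
    ultimately show ?thesis using im0 unfolding r_def by simp
  qed
qed



theorem mainTheorem1:
  fixes f f' f'' :: "'n::finite \<Rightarrow> real \<Rightarrow> real" and \<rho> :: real
  assumes d1: "\<And>i x. x \<ge> 0 \<Longrightarrow> (f i has_real_derivative f' i x) (at x within {0..})"
      and d2: "\<And>i x. x \<ge> 0 \<Longrightarrow> (f' i has_real_derivative f'' i x) (at x within {0..})"
      and nonneg: "\<And>i x. x \<ge> 0 \<Longrightarrow> f i x \<ge> 0"
      and zero: "\<And>i. f i 0 = 0"
      and below: "\<And>i x. x > 0 \<Longrightarrow> f i x < x"
      and incr: "\<And>i x. x \<ge> 0 \<Longrightarrow> f' i x > 0"
      and conc: "\<And>i x. x \<ge> 0 \<Longrightarrow> f'' i x < 0"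
      and lim: "\<And>i. \<exists>K. (f i \<longlongrightarrow> K) at_top"
      and rho: "0 \<le> \<rho>" "\<rho> < 1"
  shows "(\<exists>!(u, \<mu>). u \<in> prob_simplex \<and> 0 < \<mu> \<and> \<mu> < 1 \<and>
            (\<forall>i. u$i = ((1 - \<rho>) + \<rho> / \<mu>) * f i (u$i)
                        + (1 - \<rho>) / real CARD('n) * (1 - \<mu>)) \<and>
            \<mu> = (\<Sum>i\<in>UNIV. f i (u$i)))
       \<and> (\<exists>!u. u \<in> prob_simplex \<and> forage_map f \<rho> u = u)
       \<and> (\<forall>u. u \<in> prob_simplex \<and> forage_map f \<rho> u = u \<longrightarrow>
            (\<exists>DF. (forage_map f \<rho> has_derivative DF) (at u) \<and>
                  (\<forall>lam. is_eigenvalue (matrix DF) lam \<longrightarrow>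
                         Im lam = 0 \<and> 0 \<le> Re lam \<and> Re lam < 1)))"
proof -
  define m where "m = real CARD('n)"
  have m: "m > 0" by (simp add: m_def)
  define c where "c = (1 - \<rho>) / m"
  have c: "c > 0" using m rho by (simp add: c_def)
  have mc: "m * c = 1 - \<rho>" using m by (simp add: c_def)
  have ceq: "(1 - \<rho>) / real CARD('n) = c" by (simp add: c_def m_def)
  have ci: "concf (f i) (f' i) (f'' i)" for i
    by unfold_locales (auto intro: d1 d2 conc)
  have fpos: "f i x > 0" if "x > 0" for i x
  proof -
    have "f i 0 \<le> f i x + f' i x * (0 - x)" using concf.tangent[OF ci, of x 0] that by simp
    moreover have "f' i x * x > 0" using incr[of x i] that by simp
    ultimately show ?thesis using zero[of i] by simp
  qed
  have fle: "f i x \<le> x" if "x \<ge> 0" for i x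
    using below[of x i] zero[of i] that by (cases "x = 0") auto
  define SS where "SS u = (\<Sum>i\<in>UNIV. f i (u$i))" for u :: "real^'n"
  define P where "P = (\<lambda>(u::real^'n) \<mu>. u \<in> prob_simplex \<and> 0 < \<mu> \<and> \<mu> < 1 \<and>
            (\<forall>i. u$i = ((1 - \<rho>) + \<rho> / \<mu>) * f i (u$i)
                        + (1 - \<rho>) / real CARD('n) * (1 - \<mu>)) \<and>
            \<mu> = (\<Sum>i\<in>UNIV. f i (u$i)))"
  have Pd: "P u \<mu> \<longleftrightarrow> (\<forall>i. 0 \<le> u$i) \<and> (\<Sum>i\<in>UNIV. u$i) = 1 \<and> 0 < \<mu> \<and> \<mu> < 1 \<and>
            (\<forall>i. u$i = ((1 - \<rho>) + \<rho> / \<mu>) * f i (u$i) + c * (1 - \<mu>)) \<and> \<mu> = SS u" for u \<mu>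
    unfolding P_def prob_simplex_def SS_def ceq by auto
  have apos: "(1 - \<rho>) + \<rho> / \<mu> > 0" if "\<mu> > 0" for \<mu> using rho that by (simp add: add_pos_nonneg)
  have lt: False if Pu: "P u \<mu>" and Pv: "P v \<nu>" and mn: "\<mu> < \<nu>" for u v \<mu> \<nu>
  proof -
    have vi: "v$i < u$i" for i
    proof (rule ccontr)
      assume "\<not> v$i < u$i"
      then have uv: "u$i \<le> v$i" by simp
      let ?a = "(1 - \<rho>) + \<rho> / \<mu>"
      have rp: "?a * f i (u$i) + c * (1 - \<mu>) = u$i" "0 \<le> u$i" "0 \<le> v$i" "0 < \<mu>" "\<mu> < 1"
        "v$i = ((1 - \<rho>) + \<rho> / \<nu>) * f i (v$i) + c * (1 - \<nu>)" "0 < \<nu>"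
        using Pu Pv unfolding Pd by auto
      have "\<rho> / \<nu> \<le> \<rho> / \<mu>" using rho rp mn by (intro divide_left_mono) auto
      then have "((1 - \<rho>) + \<rho> / \<nu>) * f i (v$i) \<le> ?a * f i (v$i)"
        using nonneg[of "v$i" i] rp by (intro mult_right_mono) auto
      moreover have "c * (1 - \<nu>) < c * (1 - \<mu>)" using c mn by simp
      ultimately have key: "v$i < ?a * f i (v$i) + c * (1 - \<mu>)" using rp by linarith
      show False
      proof (cases "u$i = v$i")
        case True then show False using key rp by simp
      next
        case False
        then have "u$i < v$i" using uv by simp
        then have "?a * f i (v$i) + c * (1 - \<mu>) < v$i"
          using concf.root_props(4)[OF ci[of i] zero[of i] apos[OF rp(4)], of "c * (1 - \<mu>)" "u$i" "v$i"] rp c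
          by auto
        then show False using key by simp
      qed
    qed
    have "(\<Sum>i\<in>UNIV. v$i) < (\<Sum>i\<in>UNIV. u$i)" using vi by (intro sum_strict_mono) auto
    then show False using Pu Pv unfolding Pd by simp
  qed
  have eqmu: "\<mu> = \<nu>" if "P u \<mu>" "P v \<nu>" for u v \<mu> \<nu>
    using lt[OF that] lt[OF that(2,1)] by fastforce
  have equ: "u = v" if Pu: "P u \<mu>" and Pv: "P v \<mu>" for u v \<mu>
  proof -
    have *: False if "P u \<mu>" "P v \<mu>" "u$i < v$i" for u v i
    proof -
      let ?a = "(1 - \<rho>) + \<rho> / \<mu>"
      have rp: "?a * f i (u$i) + c * (1 - \<mu>) = u$i" "0 \<le> u$i" "0 \<le> v$i" "0 < \<mu>" "\<mu> < 1"
        "v$i = ?a * f i (v$i) + c * (1 - \<mu>)"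
        using that unfolding Pd by auto
      have "u$i < ?a * f i (u$i) + c * (1 - \<mu>)"
        using concf.root_props(3)[OF ci[of i] zero[of i] apos[OF rp(4)], of "c * (1 - \<mu>)" "v$i" "u$i"] rp c that(3)
        by auto
      then show False using rp by simp
    qed
    show ?thesis unfolding vec_eq_iff
      using *[OF Pu Pv] *[OF Pv Pu] by (meson linorder_neqE_linordered_idom)
  qed
  have Spos: "SS u > 0" and Slt: "SS u < 1" if us: "u \<in> prob_simplex" for u
  proof -
    have u0: "\<forall>i. 0 \<le> u$i" and u1: "(\<Sum>i\<in>UNIV. u$i) = 1" using us unfolding prob_simplex_def by auto
    obtain j where j: "u$j > 0"
    proof (rule ccontr)
      assume "\<not> thesis"
      then have "\<forall>i. u$i = 0" using that u0 by (metis order_le_less)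
      then show False using u1 by simp
    qed
    have "f j (u$j) \<le> SS u" unfolding SS_def
      using nonneg u0 by (intro member_le_sum) auto
    then show "SS u > 0" using fpos[where i=j, OF j] by simp
    have "SS u < (\<Sum>i\<in>UNIV. u$i)" unfolding SS_def
      using fle u0 below[where i=j, OF j] by (intro sum_strict_mono_ex1) auto
    then show "SS u < 1" using u1 by simp
  qed
  have Fcomp: "forage_map f \<rho> u $ i = f i (u$i) + (1 - SS u) * (\<rho> / SS u * f i (u$i) + c)" for u i
    by (simp add: forage_map_def Let_def SS_def ceq)
  have Fcomp2: "forage_map f \<rho> u $ i = ((1 - \<rho>) + \<rho> / SS u) * f i (u$i) + c * (1 - SS u)"
    if "SS u \<noteq> 0" for u i
    unfolding Fcomp using that by (simp add: field_simps)
  have fix_P: "P u (SS u)" if us: "u \<in> prob_simplex" and fx: "forage_map f \<rho> u = u" for u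
  proof -
    have "u$i = ((1 - \<rho>) + \<rho> / SS u) * f i (u$i) + c * (1 - SS u)" for i
      using Fcomp2[of u i] Spos[OF us] fx by simp
    then show ?thesis unfolding Pd using us Spos[OF us] Slt[OF us] unfolding prob_simplex_def by auto
  qed
  have P_fix: "u \<in> prob_simplex \<and> forage_map f \<rho> u = u" if Pu: "P u \<mu>" for u \<mu>
  proof -
    have mu: "\<mu> = SS u" "\<mu> > 0" using Pu unfolding Pd by auto
    show ?thesis using Pu Fcomp2[of u] mu unfolding Pd prob_simplex_def
      by (auto simp: vec_eq_iff)
  qed
  have cmp: "compact (prob_simplex :: (real^'n) set)"
  unfolding compact_eq_bounded_closed proof (intro conjI)
    show "bounded (prob_simplex :: (real^'n) set)" unfolding bounded_iff
    proof (intro exI ballI)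
      fix x :: "real^'n" assume "x \<in> prob_simplex"
      then have "(\<Sum>i\<in>UNIV. \<bar>x$i\<bar>) = 1" unfolding prob_simplex_def by auto
      then show "norm x \<le> 1" using norm_le_l1_cart[of x] by simp
    qed
    have "prob_simplex = {x::real^'n. \<forall>i. 0 \<le> x$i} \<inter> {x. (\<Sum>i\<in>UNIV. x$i) = 1}"
      unfolding prob_simplex_def by auto
    moreover have "closed {x::real^'n. (\<Sum>i\<in>UNIV. x$i) = 1}"
      by (intro closed_Collect_eq continuous_intros)
    ultimately show "closed (prob_simplex :: (real^'n) set)" using closed_positive_orthant by (metis closed_Int)
  qed
  have cvx: "convex (prob_simplex :: (real^'n) set)"
    unfolding convex_def prob_simplex_def
    by (auto simp: sum.distrib simp flip: sum_distrib_left)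
  have ne: "(prob_simplex :: (real^'n) set) \<noteq> {}"
  proof -
    have "(\<chi> i. 1 / m) \<in> (prob_simplex :: (real^'n) set)"
      unfolding prob_simplex_def using m by (auto simp: m_def)
    then show ?thesis by auto
  qed
  have cf: "continuous_on prob_simplex (\<lambda>u::real^'n. f i (u$i))" for i
  proof (rule continuous_on_compose2[OF concf.cont_g[OF ci] continuous_on_component[OF continuous_on_id]])
    show "(\<lambda>u::real^'n. u$i) ` prob_simplex \<subseteq> {0..}" unfolding prob_simplex_def by auto
  qed
  have cS: "continuous_on prob_simplex SS" unfolding SS_def by (intro continuous_intros cf)
  have cF: "continuous_on prob_simplex (forage_map f \<rho>)"
  proof -
    have "continuous_on prob_simplex (\<lambda>u. \<chi> i. f i (u$i) + (1 - SS u) * (\<rho> / SS u * f i (u$i) + c))"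
      using Spos by (intro continuous_intros cf cS) (metis less_irrefl)
    moreover have "(\<lambda>u. \<chi> i. f i (u$i) + (1 - SS u) * (\<rho> / SS u * f i (u$i) + c)) = forage_map f \<rho>"
      by (auto simp: vec_eq_iff Fcomp)
    ultimately show ?thesis by metis
  qed
  have Fin: "forage_map f \<rho> u \<in> prob_simplex" if us: "u \<in> prob_simplex" for u
  proof -
    have u0: "\<forall>i. 0 \<le> u$i" using us unfolding prob_simplex_def by auto
    have S: "SS u > 0" "SS u < 1" using Spos[OF us] Slt[OF us] by auto
    have "forage_map f \<rho> u $ i \<ge> 0" for i
      unfolding Fcomp using nonneg[of "u$i" i] u0 S c rho by (auto intro!: add_nonneg_nonneg mult_nonneg_nonneg)
    moreover have "(\<Sum>i\<in>UNIV. forage_map f \<rho> u $ i) = 1"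
    proof -
      have "(\<Sum>i\<in>UNIV. forage_map f \<rho> u $ i) = (\<Sum>i\<in>UNIV. ((1 - \<rho>) + \<rho> / SS u) * f i (u$i) + c * (1 - SS u))"
        using Fcomp2 S by simp
      also have "\<dots> = ((1 - \<rho>) + \<rho> / SS u) * SS u + m * (c * (1 - SS u))"
        by (simp add: sum.distrib SS_def sum_distrib_left m_def)
      also have "\<dots> = ((1 - \<rho>) + \<rho> / SS u) * SS u + (1 - \<rho>) * (1 - SS u)"
        using mc by (simp add: mult.assoc[symmetric])
      also have "\<dots> = 1" using S by (simp add: field_simps)
      finally show ?thesis .
    qed
    ultimately show ?thesis unfolding prob_simplex_def by auto
  qed
  obtain u0 where u0: "u0 \<in> prob_simplex" "forage_map f \<rho> u0 = u0"
    using brouwer[OF cmp cvx ne cF] Fin by blast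
  have P0: "P u0 (SS u0)" using fix_P[OF u0] .
  have part1: "\<exists>!(u, \<mu>). P u \<mu>"
  proof (rule ex1I[of _ "(u0, SS u0)"])
    show "case (u0, SS u0) of (u, \<mu>) \<Rightarrow> P u \<mu>" using P0 by simp
    fix y assume "case y of (u, \<mu>) \<Rightarrow> P u \<mu>"
    then obtain u \<mu> where y: "y = (u, \<mu>)" and Pu: "P u \<mu>" by (cases y) auto
    have "\<mu> = SS u0" using eqmu[OF Pu P0] .
    then show "y = (u0, SS u0)" using equ[of u \<mu> u0] Pu P0 y by simp
  qed
  have part2: "\<exists>!u. u \<in> prob_simplex \<and> forage_map f \<rho> u = u"
  proof (rule ex1I[of _ u0])
    show "u0 \<in> prob_simplex \<and> forage_map f \<rho> u0 = u0" using u0 by simp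
    fix v assume "v \<in> prob_simplex \<and> forage_map f \<rho> v = v"
    then have Pv: "P v (SS v)" using fix_P by blast
    then have "SS v = SS u0" using eqmu[OF Pv P0] by simp
    then show "v = u0" using equ[of v "SS v" u0] Pv P0 by simp
  qed
  have part3: "\<forall>u. u \<in> prob_simplex \<and> forage_map f \<rho> u = u \<longrightarrow>
            (\<exists>DF. (forage_map f \<rho> has_derivative DF) (at u) \<and>
                  (\<forall>lam. is_eigenvalue (matrix DF) lam \<longrightarrow>
                         Im lam = 0 \<and> 0 \<le> Re lam \<and> Re lam < 1))"
  proof (intro allI impI)
    fix u :: "real^'n" assume uf: "u \<in> prob_simplex \<and> forage_map f \<rho> u = u"
    define S where "S = SS u"
    have Pu: "P u S" using fix_P uf unfolding S_def by blast
    have S: "0 < S" "S < 1" using Pu unfolding Pd by auto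
    define a where "a = (1 - \<rho>) + \<rho> / S"
    have a: "a > 0" unfolding a_def using apos S by simp
    have ueq: "u$i = a * f i (u$i) + c * (1 - S)" for i using Pu unfolding Pd a_def by auto
    have u0: "u$i \<ge> 0" for i using Pu unfolding Pd by auto
    have t: "c * (1 - S) > 0" using c S by simp
    have upos: "u$i > 0" for i
    proof -
      have "a * f i (u$i) \<ge> 0" using a nonneg[OF u0[of i]] by simp
      then show ?thesis using ueq[of i] t by linarith
    qed
    define d where "d k = f' k (u$k)" for k
    define b where "b k = \<rho> * f k (u$k) / S^2 + c" for k
    define DF where "DF h = (\<chi> i. a * d i * h$i - b i * (\<Sum>k\<in>UNIV. d k * h$k))" for h :: "real^'n"
    have dpos: "d k > 0" for k unfolding d_def using incr u0 by auto
    have bpos: "b k > 0" for k unfolding b_def using rho nonneg[OF u0[of k]] c S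
      by (intro add_nonneg_pos) auto
    have dfk: "((\<lambda>x::real^'n. f k (x$k)) has_derivative (\<lambda>h. d k * h$k)) (at u)" for k
    proof -
      have "(f k has_real_derivative d k) (at (u$k))"
        unfolding d_def using concf.at_pos[OF ci[of k] upos[of k] d1[OF u0[of k]]] .
      then have "(f k has_derivative (\<lambda>h. d k * h)) (at (u$k))" by (simp add: has_field_derivative_def)
      from has_derivative_compose[OF bounded_linear.has_derivative[OF bounded_linear_vec_nth[of k] has_derivative_ident] this]
      show ?thesis .
    qed
    have dS: "(SS has_derivative (\<lambda>h. \<Sum>k\<in>UNIV. d k * h$k)) (at u)"
      unfolding SS_def by (rule has_derivative_sum) (rule dfk)
    have SSu: "SS u = S" by (simp add: S_def)
    have compj: "((\<lambda>x. forage_map f \<rho> x $ j) has_derivative (\<lambda>h. DF h $ j)) (at u)" for j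
    proof -
      have eqF: "(\<lambda>x. forage_map f \<rho> x $ j) = (\<lambda>x. f j (x$j) + (1 - SS x) * (\<rho> / SS x * f j (x$j) + c))"
        by (simp add: Fcomp)
      have "((\<lambda>x. f j (x$j) + (1 - SS x) * (\<rho> / SS x * f j (x$j) + c)) has_derivative (\<lambda>h. DF h $ j)) (at u)"
        apply (rule has_derivative_eq_rhs)
         apply (rule has_derivative_add[OF dfk has_derivative_mult[OF has_derivative_diff[OF has_derivative_const dS]
            has_derivative_add[OF has_derivative_mult[OF has_derivative_divide[OF has_derivative_const dS] dfk] has_derivative_const]]])
        using S apply (simp add: SSu)
        apply (rule ext)
        using S apply (simp add: SSu DF_def a_def b_def power2_eq_square field_simps)
        done
      then show ?thesis unfolding eqF .
    qed
    have dF: "(forage_map f \<rho> has_derivative DF) (at u)"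
    proof (subst has_derivative_componentwise_within, intro ballI)
      fix e :: "real^'n" assume "e \<in> Basis"
      then obtain j where e: "e = axis j 1" unfolding Basis_vec_def by auto
      show "((\<lambda>x. forage_map f \<rho> x \<bullet> e) has_derivative (\<lambda>x. DF x \<bullet> e)) (at u)"
        unfolding e inner_axis using compj[of j] by simp
    qed
    have MDF: "matrix DF $ i $ k = a * d i * (if i = k then 1 else 0) - b i * d k" for i k
      unfolding matrix_def DF_def axis_def by (simp add: if_distrib cong: if_cong)
    have eig: "Im lam = 0 \<and> 0 \<le> Re lam \<and> Re lam < 1" if "is_eigenvalue (matrix DF) lam" for lam
    proof -
      from that obtain v where v: "v \<noteq> 0" "cmat (matrix DF) *v v = lam *s v"
        unfolding is_eigenvalue_def by auto
      obtain i0 where i0: "v$i0 \<noteq> 0" using v(1) by (auto simp: vec_eq_iff)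
      have comp: "of_real (a * d i) * v$i - of_real (b i) * (\<Sum>k\<in>UNIV. of_real (d k) * v$k) = lam * v$i" for i
      proof -
        have pw: "of_real (matrix DF $ i $ k) * v$k = (if k = i then of_real (a * d i) * v$k else 0)
             - of_real (b i) * (of_real (d k) * v$k)" for k
          by (cases "k = i") (simp_all add: MDF algebra_simps)
        have "lam * v$i = (cmat (matrix DF) *v v) $ i" using v(2) by simp
        also have "\<dots> = (\<Sum>k\<in>UNIV. of_real (matrix DF $ i $ k) * v$k)"
          by (simp add: matrix_vector_mult_def cmat_def)
        also have "\<dots> = of_real (a * d i) * v$i - of_real (b i) * (\<Sum>k\<in>UNIV. of_real (d k) * v$k)"
          by (simp only: pw sum_subtractf sum_distrib_left) simp
        finally show ?thesis by simp
      qed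
      have x1: "a * d i < 1" for i
        using concf.root_props(2)[OF ci[of i] zero[of i] a t u0[of i] ueq[of i]] unfolding d_def .
      have sb: "(\<Sum>i\<in>UNIV. b i) = a"
      proof -
        have "(\<Sum>i\<in>UNIV. b i) = \<rho> / S^2 * (\<Sum>i\<in>UNIV. f i (u$i)) + m * c"
          by (simp add: b_def sum.distrib sum_distrib_left m_def)
        also have "(\<Sum>i\<in>UNIV. f i (u$i)) = S" by (simp add: S_def SS_def)
        finally show ?thesis using mc S by (simp add: a_def power2_eq_square)
      qed
      have sumw: "(\<Sum>i\<in>UNIV. d i * b i / (a * d i)) = 1"
      proof -
        have "(\<Sum>i\<in>UNIV. d i * b i / (a * d i)) = (\<Sum>i\<in>UNIV. b i / a)"
        proof (intro sum.cong refl)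
          fix i :: 'n
          have "d i \<noteq> 0" using dpos[of i] by simp
          then show "d i * b i / (a * d i) = b i / a" by simp
        qed
        also have "\<dots> = 1" using sb a by (simp flip: sum_divide_distrib)
        finally show ?thesis .
      qed
      show ?thesis
        using eig_core[where x="\<lambda>i. a * d i" and b=b and d=d and v="\<lambda>i. v$i" and lam=lam]
          comp i0 a dpos bpos x1 sumw by simp
    qed
    show "\<exists>DF. (forage_map f \<rho> has_derivative DF) (at u) \<and>
                  (\<forall>lam. is_eigenvalue (matrix DF) lam \<longrightarrow>
                         Im lam = 0 \<and> 0 \<le> Re lam \<and> Re lam < 1)"
      using dF eig by blast
  qed
  show ?thesis using part1 part2 part3 unfolding P_def by blast
qed

end
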